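(* A finite simple graph $G$ is a circular-arc graph if and only if there is a circular ordering of $V(G)$ in which there are no four distinct vertices $a,b,c,d$ appearing clockwise in this order such that $bd\in E(G)$, $ad\notin E(G)$ and $bc\notin E(G)$ (equivalently, $G$ admits a $CA$-free circular ordering).
   Context: A circular ordering of a finite set is obtained by placing its elements at distinct points of a circle; vertices $a,b,c,d$ "appear clockwise in this order" if traversing the circle clockwise from $a$ one meets $b$, then $c$, then $d$. $CA$ is the circularly ordered pattern on $v_1,v_2,v_3,v_4$ (clockwise in this order) with required edge $v_2v_4$, required non-edges $v_1v_4$ and $v_2v_3$, and the other pairs unspecified; a circular ordering of $G$ is $CA$-free if no four vertices induce a circularly ordered graph represented by this pattern. A circular-arc graph is the intersection graph of a finite family of arcs of a circle. *)

theory Defs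
  imports Complex_Main
begin

definition finite_simple_graph :: "'a set \<Rightarrow> ('a \<Rightarrow> 'a \<Rightarrow> bool) \<Rightarrow> bool" where
  "finite_simple_graph V E \<longleftrightarrow> finite V \<and>
     (\<forall>u v. E u v \<longrightarrow> u \<in> V \<and> v \<in> V) \<and>
     (\<forall>u v. E u v \<longrightarrow> E v u) \<and> (\<forall>v. \<not> E v v)"

text \<open>Closed arc of the unit circle in the complex plane, starting at angle s and
  of angular length l (l \<ge> 0; l \<ge> 2 pi gives the whole circle, l = 0 a point).\<close>
definition arc_of_circle :: "real \<Rightarrow> real \<Rightarrow> complex set" where
  "arc_of_circle s l = (\<lambda>\<theta>. cis \<theta>) ` {s..s + l}"

definition is_arc :: "complex set \<Rightarrow> bool" where
  "is_arc A \<longleftrightarrow> (\<exists>s l. 0 \<le> l \<and> A = arc_of_circle s l)"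

definition circular_arc_graph :: "'a set \<Rightarrow> ('a \<Rightarrow> 'a \<Rightarrow> bool) \<Rightarrow> bool" where
  "circular_arc_graph V E \<longleftrightarrow> (\<exists>A :: 'a \<Rightarrow> complex set.
     (\<forall>v\<in>V. is_arc (A v)) \<and>
     (\<forall>u\<in>V. \<forall>v\<in>V. u \<noteq> v \<longrightarrow> (E u v \<longleftrightarrow> A u \<inter> A v \<noteq> {})))"

text \<open>A circular ordering of V is represented by a linear numbering of V (cut open at
  some point of the circle); clockwise order is then the cyclic order of the numbers.\<close>
definition circular_ordering :: "'a set \<Rightarrow> ('a \<Rightarrow> nat) \<Rightarrow> bool" where
  "circular_ordering V f \<longleftrightarrow> bij_betw f V {0..<card V}"

definition clockwise4 :: "('a \<Rightarrow> nat) \<Rightarrow> 'a \<Rightarrow> 'a \<Rightarrow> 'a \<Rightarrow> 'a \<Rightarrow> bool" where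
  "clockwise4 f a b c d \<longleftrightarrow>
     (f a < f b \<and> f b < f c \<and> f c < f d) \<or>
     (f b < f c \<and> f c < f d \<and> f d < f a) \<or>
     (f c < f d \<and> f d < f a \<and> f a < f b) \<or>
     (f d < f a \<and> f a < f b \<and> f b < f c)"

definition CA_free :: "'a set \<Rightarrow> ('a \<Rightarrow> 'a \<Rightarrow> bool) \<Rightarrow> ('a \<Rightarrow> nat) \<Rightarrow> bool" where
  "CA_free V E f \<longleftrightarrow> \<not> (\<exists>a\<in>V. \<exists>b\<in>V. \<exists>c\<in>V. \<exists>d\<in>V.
     distinct [a, b, c, d] \<and> clockwise4 f a b c d \<and> E b d \<and> \<not> E a d \<and> \<not> E b c)"

end

theory Submission
  imports Defs
begin

lemma cis_eq_iff': "cis x = cis y \<longleftrightarrow> (\<exists>n::int. x = y + 2 * pi * n)"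
proof -
  have "cis x = cis y \<longleftrightarrow> sin x = sin y \<and> cos x = cos y"
    by (auto simp add: complex_eq_iff)
  also have "\<dots> \<longleftrightarrow> (\<exists>n::int. x = y + 2 * pi * n)" using sin_cos_eq_iff by metis
  finally show ?thesis .
qed

lemma arc_shift: "arc_of_circle (s + 2 * pi * of_int k) l = arc_of_circle s l"
proof -
  have "arc_of_circle (s + 2 * pi * of_int k) l = (\<lambda>\<theta>. cis (\<theta> + 2 * pi * of_int k)) ` {s..s+l}"
    unfolding arc_of_circle_def
    by (subst image_image[symmetric], rule arg_cong[where f="image cis"])
       (simp add: image_add_atLeastAtMost' algebra_simps)
  also have "\<dots> = arc_of_circle s l" unfolding arc_of_circle_def
    by (rule image_cong[OF refl]) (metis cis_eq_iff')
  finally show ?thesis .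
qed

lemma arc_inter_iff:
  assumes "0 \<le> l" "0 \<le> l'"
  shows "arc_of_circle s l \<inter> arc_of_circle s' l' \<noteq> {} \<longleftrightarrow>
         (\<exists>k::int. s' + 2 * pi * k \<le> s + l \<and> s \<le> s' + l' + 2 * pi * k)"
proof
  assume "arc_of_circle s l \<inter> arc_of_circle s' l' \<noteq> {}"
  then obtain \<theta> \<phi> where t: "\<theta> \<in> {s..s+l}" "\<phi> \<in> {s'..s'+l'}" "cis \<theta> = cis \<phi>"
    unfolding arc_of_circle_def by fastforce
  then obtain k :: int where "\<theta> = \<phi> + 2 * pi * k" using cis_eq_iff' by metis
  then show "\<exists>k::int. s' + 2 * pi * k \<le> s + l \<and> s \<le> s' + l' + 2 * pi * k"
    using t by (intro exI[of _ k]) auto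
next
  assume "\<exists>k::int. s' + 2 * pi * k \<le> s + l \<and> s \<le> s' + l' + 2 * pi * k"
  then obtain k :: int where k: "s' + 2 * pi * k \<le> s + l" "s \<le> s' + l' + 2 * pi * k" by blast
  define \<theta> where "\<theta> = max s (s' + 2 * pi * k)"
  have "\<theta> \<in> {s..s+l}" using k assms unfolding \<theta>_def by auto
  moreover have "\<theta> - 2 * pi * k \<in> {s'..s'+l'}" using k assms unfolding \<theta>_def by auto
  moreover have "cis \<theta> = cis (\<theta> - 2 * pi * k)" using cis_eq_iff' by auto
  ultimately show "arc_of_circle s l \<inter> arc_of_circle s' l' \<noteq> {}"
    unfolding arc_of_circle_def by (metis IntI empty_iff image_eqI)
qed

lemma arc_inter_ordered:
  assumes "0 \<le> l" "0 \<le> l'" "0 \<le> s" "s \<le> s'" "s' < 2 * pi"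
  shows "arc_of_circle s l \<inter> arc_of_circle s' l' \<noteq> {} \<longleftrightarrow>
         (s' \<le> s + l \<or> s + 2 * pi \<le> s' + l')"
proof -
  have A: "(\<exists>k::int. s' + 2 * pi * k \<le> s + l \<and> s \<le> s' + l' + 2 * pi * k) \<longleftrightarrow>
         (s' \<le> s + l \<or> s + 2 * pi \<le> s' + l')"
  proof
    assume "\<exists>k::int. s' + 2 * pi * k \<le> s + l \<and> s \<le> s' + l' + 2 * pi * k"
    then obtain k :: int where k: "s' + 2 * pi * k \<le> s + l" "s \<le> s' + l' + 2 * pi * k" by blast
    show "s' \<le> s + l \<or> s + 2 * pi \<le> s' + l'"
    proof (cases "k \<ge> 0")
      case True
      then have "2 * pi * k \<ge> 0" by simp
      then show ?thesis using k by linarith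
    next
      case False
      then have "real_of_int k \<le> -1" by simp
      then have "2 * pi * k \<le> 2 * pi * (-1)" using pi_gt_zero
        by (intro mult_left_mono) auto
      then show ?thesis using k by linarith
    qed
  next
    assume "s' \<le> s + l \<or> s + 2 * pi \<le> s' + l'"
    then show "\<exists>k::int. s' + 2 * pi * k \<le> s + l \<and> s \<le> s' + l' + 2 * pi * k"
    proof
      assume "s' \<le> s + l" then show ?thesis using assms by (intro exI[of _ 0]) auto
    next
      assume "s + 2 * pi \<le> s' + l'" then show ?thesis using assms by (intro exI[of _ "-1"]) auto
    qed
  qed
  show ?thesis using arc_inter_iff[OF assms(1,2)] A by simp
qed


lemma sort_exists:
  fixes s :: "'a \<Rightarrow> real"
  assumes "finite V"
  shows "\<exists>f. bij_betw f V {0..<card V} \<and> (\<forall>x\<in>V. \<forall>y\<in>V. f x < f y \<longrightarrow> s x \<le> s y)"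
  using assms
proof (induction "card V" arbitrary: V)
  case 0
  then have "V = {}" by simp
  then show ?case by (simp add: bij_betw_def)
next
  case (Suc n)
  then have ne: "V \<noteq> {}" by auto
  have "Max (s ` V) \<in> s ` V" using Suc.prems ne by simp
  then obtain m where m: "m \<in> V" "s m = Max (s ` V)" by auto
  have mx: "\<forall>y\<in>V. s y \<le> s m" using m Suc.prems by simp
  define V' where "V' = V - {m}"
  have cV': "card V' = n" using Suc.hyps(2) m unfolding V'_def by simp
  obtain f' where f': "bij_betw f' V' {0..<n}" "\<forall>x\<in>V'. \<forall>y\<in>V'. f' x < f' y \<longrightarrow> s x \<le> s y"
    using Suc.hyps(1)[of V'] cV' Suc.prems unfolding V'_def by auto
  define f where "f = f'(m := n)"
  have mV: "m \<notin> V'" "V = insert m V'" using m unfolding V'_def by auto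
  have fV': "\<forall>x\<in>V'. f x = f' x" using mV unfolding f_def by auto
  have lt: "\<forall>x\<in>V'. f' x < n" using f' unfolding bij_betw_def by auto
  have inj: "inj_on f V"
    unfolding mV using f'(1) fV' lt mV unfolding bij_betw_def inj_on_def f_def
    by (metis fun_upd_other fun_upd_same insert_iff less_irrefl)
  have img: "f ` V = {0..<Suc n}"
  proof -
    have "f ` V = insert n (f ` V')" using mV unfolding f_def by auto
    also have "f ` V' = f' ` V'" using fV' by (auto intro: image_cong)
    also have "f' ` V' = {0..<n}" using f'(1) unfolding bij_betw_def by auto
    finally show ?thesis by auto
  qed
  have "\<forall>x\<in>V. \<forall>y\<in>V. f x < f y \<longrightarrow> s x \<le> s y"
  proof (intro ballI impI)
    fix x y assume xy: "x \<in> V" "y \<in> V" "f x < f y"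
    show "s x \<le> s y"
    proof (cases "y = m")
      case True then show ?thesis using mx xy by simp
    next
      case False
      then have "y \<in> V'" using xy mV by auto
      moreover have "x \<noteq> m" using xy lt fV' \<open>y \<in> V'\<close> unfolding f_def by auto
      then have "x \<in> V'" using xy mV by auto
      ultimately show ?thesis using f'(2) fV' xy by auto
    qed
  qed
  then show ?case using inj img Suc.hyps(2) unfolding bij_betw_def by auto
qed


lemma clockwise4_distinct: "clockwise4 f a b c d \<Longrightarrow> distinct [a, b, c, d]"
  unfolding clockwise4_def by auto

lemma forward:
  assumes G: "finite_simple_graph V E" and C: "circular_arc_graph V E"
  shows "\<exists>f. circular_ordering V f \<and> CA_free V E f"
proof -
  obtain A where A: "\<forall>v\<in>V. is_arc (A v)"
    "\<forall>u\<in>V. \<forall>v\<in>V. u \<noteq> v \<longrightarrow> (E u v \<longleftrightarrow> A u \<inter> A v \<noteq> {})"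
    using C unfolding circular_arc_graph_def by blast
  have "\<forall>v\<in>V. \<exists>p. 0 \<le> snd p \<and> A v = arc_of_circle (fst p) (snd p)"
    using A(1) unfolding is_arc_def by auto
  then obtain p where p: "\<forall>v\<in>V. 0 \<le> snd (p v) \<and> A v = arc_of_circle (fst (p v)) (snd (p v))"
    by metis
  define l where "l v = snd (p v)" for v
  define s where "s v = fst (p v) - 2 * pi * of_int \<lfloor>fst (p v) / (2 * pi)\<rfloor>" for v
  have l0: "\<forall>v\<in>V. 0 \<le> l v" using p l_def by auto
  have As: "\<forall>v\<in>V. A v = arc_of_circle (s v) (l v)"
  proof
    fix v assume "v \<in> V"
    have "arc_of_circle (s v) (l v) = arc_of_circle (s v + 2 * pi * of_int \<lfloor>fst (p v) / (2 * pi)\<rfloor>) (l v)"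
      by (rule arc_shift[symmetric])
    also have "\<dots> = A v" using p \<open>v \<in> V\<close> unfolding s_def l_def by simp
    finally show "A v = arc_of_circle (s v) (l v)" by simp
  qed
  have srange: "0 \<le> s v \<and> s v < 2 * pi" for v
  proof -
    define x where "x = fst (p v) / (2 * pi)"
    have e: "s v = 2 * pi * (x - of_int \<lfloor>x\<rfloor>)" unfolding s_def x_def
      by (simp add: algebra_simps)
    have "0 \<le> x - of_int \<lfloor>x\<rfloor>" "x - of_int \<lfloor>x\<rfloor> < 1" by linarith+
    then show ?thesis unfolding e using pi_gt_zero by (auto intro: mult_nonneg_nonneg)
  qed
  have fin: "finite V" using G unfolding finite_simple_graph_def by auto
  obtain f where f: "bij_betw f V {0..<card V}" "\<forall>x\<in>V. \<forall>y\<in>V. f x < f y \<longrightarrow> s x \<le> s y"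
    using sort_exists[OF fin, of s] by blast
  have sym: "E u v \<longleftrightarrow> E v u" for u v using G unfolding finite_simple_graph_def by blast
  have key: "E u v \<longleftrightarrow> s v \<le> s u + l u \<or> s u + 2 * pi \<le> s v + l v"
    if "u \<in> V" "v \<in> V" "f u < f v" for u v
  proof -
    have "u \<noteq> v" using that by auto
    then have "E u v \<longleftrightarrow> A u \<inter> A v \<noteq> {}" using A(2) that by auto
    also have "\<dots> \<longleftrightarrow> s v \<le> s u + l u \<or> s u + 2 * pi \<le> s v + l v"
      using As that l0 srange[of u] srange[of v] f(2)
      by (simp add: arc_inter_ordered)
    finally show ?thesis .
  qed
  have "CA_free V E f"
    unfolding CA_free_def
  proof (clarify)
    fix a b c d
    assume V: "a \<in> V" "b \<in> V" "c \<in> V" "d \<in> V" and cw: "clockwise4 f a b c d"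
      and e: "E b d" "\<not> E a d" "\<not> E b c"
    note sr = srange[of a] srange[of b] srange[of c] srange[of d]
    note ll = l0[rule_format, OF V(1)] l0[rule_format, OF V(2)] l0[rule_format, OF V(3)] l0[rule_format, OF V(4)]
    from cw show False unfolding clockwise4_def
    proof (elim disjE conjE)
      assume o: "f a < f b" "f b < f c" "f c < f d"
      have "s a \<le> s b" "s b \<le> s c" "s c \<le> s d" using o f(2) V by auto
      moreover have "f b < f d" "f a < f d" using o by auto
      ultimately show False using o key[of b d] key[of b c] key[of a d] e V sr ll by auto
    next
      assume o: "f b < f c" "f c < f d" "f d < f a"
      have "s b \<le> s c" "s c \<le> s d" "s d \<le> s a" using o f(2) V by auto
      moreover have "f b < f d" "f d < f a" using o by auto
      ultimately show False using o key[of b d] key[of b c] key[of d a] e V sr ll sym[of a d] by auto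
    next
      assume o: "f c < f d" "f d < f a" "f a < f b"
      have "s c \<le> s d" "s d \<le> s a" "s a \<le> s b" using o f(2) V by auto
      moreover have "f d < f b" "f c < f b" using o by auto
      ultimately show False using o key[of d b] key[of c b] key[of d a] e V sr ll sym[of a d] sym[of b d] sym[of b c] by auto
    next
      assume o: "f d < f a" "f a < f b" "f b < f c"
      have "s d \<le> s a" "s a \<le> s b" "s b \<le> s c" using o f(2) V by auto
      moreover have "f d < f b" using o by auto
      ultimately show False using o key[of d b] key[of b c] key[of d a] e V sr ll sym[of a d] sym[of b d] by auto
    qed
  qed
  then show ?thesis using f(1) unfolding circular_ordering_def by blast
qed


lemma mod_2n: "n \<le> (x::nat) \<Longrightarrow> x < 2 * n \<Longrightarrow> x mod n = x - n"
  by (simp add: mod_if)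

lemma dlem:
  assumes "fu < n" "fv < (n::nat)"
  shows "(fv + n - fu) mod n = (if fu \<le> fv then fv - fu else fv + n - fu)"
  using assms by (auto simp: mod_2n)

lemma cw_lemma:
  assumes "p0 < n" "0 < o1" "o1 < o2" "o2 < o3" "o3 < (n::nat)"
    "f b = p0" "f c = (p0 + o1) mod n" "f d = (p0 + o2) mod n" "f a = (p0 + o3) mod n"
  shows "clockwise4 f a b c d"
  using assms unfolding clockwise4_def
  by (cases "p0 + o1 < n"; cases "p0 + o2 < n"; cases "p0 + o3 < n") (auto simp: mod_2n)

lemma int_lemma:
  fixes D n mu mv :: int
  assumes "-n < D" "D < n" "D \<noteq> 0" "0 \<le> mu" "mu < n" "0 \<le> mv" "mv < n"
  shows "(\<exists>k. D + n * k \<le> mu \<and> -mv \<le> D + n * k) \<longleftrightarrow>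
         (if D > 0 then D \<le> mu \<or> n - D \<le> mv else n + D \<le> mu \<or> -D \<le> mv)"
proof
  assume "\<exists>k. D + n * k \<le> mu \<and> -mv \<le> D + n * k"
  then obtain k where k: "D + n * k \<le> mu" "-mv \<le> D + n * k" by blast
  have "k \<ge> 1 \<or> k = 0 \<or> k = -1 \<or> k \<le> -2" by linarith
  then show "if D > 0 then D \<le> mu \<or> n - D \<le> mv else n + D \<le> mu \<or> -D \<le> mv"
  proof (elim disjE)
    assume "k \<ge> 1"
    then have "n * k \<ge> n * 1" using assms by (intro mult_left_mono) auto
    then show ?thesis using k assms by (smt (verit))
  next
    assume "k \<le> -2"
    then have "n * k \<le> n * (-2)" using assms by (intro mult_left_mono) auto
    then show ?thesis using k assms by (smt (verit))
  qed (use k assms in auto)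
next
  assume h: "if D > 0 then D \<le> mu \<or> n - D \<le> mv else n + D \<le> mu \<or> -D \<le> mv"
  show "\<exists>k. D + n * k \<le> mu \<and> -mv \<le> D + n * k"
  proof (cases "D > 0")
    case True
    show ?thesis
    proof (cases "D \<le> mu")
      case True then show ?thesis using assms \<open>D > 0\<close> by (intro exI[of _ 0]) auto
    next
      case False then show ?thesis using h assms \<open>D > 0\<close> by (intro exI[of _ "-1"]) auto
    qed
  next
    case False
    show ?thesis
    proof (cases "n + D \<le> mu")
      case True then show ?thesis using assms by (intro exI[of _ 1]) auto
    next
      case F2: False then show ?thesis using h assms False by (intro exI[of _ 0]) auto
    qed
  qed
qed


lemma arc_grid:
  assumes n: "n > (0::nat)"
  shows "arc_of_circle (2*pi*fu/n) (2*pi*mu/n) \<inter> arc_of_circle (2*pi*fv/n) (2*pi*mv/n) \<noteq> {}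
     \<longleftrightarrow> (\<exists>k::int. int fv - int fu + int n * k \<le> int mu \<and> - int mv \<le> int fv - int fu + int n * k)"
proof -
  define c where "c = 2 * pi / n"
  have c: "c > 0" using n unfolding c_def by simp
  have e1: "2*pi*fv/n + 2*pi*k \<le> 2*pi*fu/n + 2*pi*mu/n \<longleftrightarrow> int fv - int fu + int n * k \<le> int mu"
    for k :: int
  proof -
    have "2*pi*fv/n + 2*pi*k = c * (fv + n*k)" "2*pi*fu/n + 2*pi*mu/n = c * (fu + mu)"
      using n unfolding c_def by (simp_all add: field_simps)
    then have "2*pi*fv/n + 2*pi*k \<le> 2*pi*fu/n + 2*pi*mu/n \<longleftrightarrow> real fv + real n * k \<le> real fu + real mu"
      using c by simp
    also have "\<dots> \<longleftrightarrow> real_of_int (int fv - int fu + int n * k) \<le> real_of_int (int mu)"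
      by (simp only: of_int_add of_int_diff of_int_mult of_int_of_nat_eq of_int_minus) linarith
    also have "\<dots> \<longleftrightarrow> int fv - int fu + int n * k \<le> int mu" by (rule of_int_le_iff)
    finally show ?thesis .
  qed
  have e2: "2*pi*fu/n \<le> 2*pi*fv/n + 2*pi*mv/n + 2*pi*k \<longleftrightarrow> - int mv \<le> int fv - int fu + int n * k"
    for k :: int
  proof -
    have "2*pi*fv/n + 2*pi*mv/n + 2*pi*k = c * (fv + mv + n*k)" "2*pi*fu/n = c * fu"
      using n unfolding c_def by (simp_all add: field_simps)
    then have "2*pi*fu/n \<le> 2*pi*fv/n + 2*pi*mv/n + 2*pi*k \<longleftrightarrow> real fu \<le> real fv + real mv + real n * k"
      using c by simp
    also have "\<dots> \<longleftrightarrow> real_of_int (- int mv) \<le> real_of_int (int fv - int fu + int n * k)"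
      by (simp only: of_int_add of_int_diff of_int_mult of_int_of_nat_eq of_int_minus) linarith
    also have "\<dots> \<longleftrightarrow> - int mv \<le> int fv - int fu + int n * k" by (rule of_int_le_iff)
    finally show ?thesis .
  qed
  show ?thesis
    by (subst arc_inter_iff) (use e1 e2 in auto)
qed


lemma grid_cond:
  assumes "fu < n" "fv < n" "fu \<noteq> fv" "mu < n" "mv < (n::nat)"
  shows "(\<exists>k::int. int fv - int fu + int n * k \<le> int mu \<and> - int mv \<le> int fv - int fu + int n * k)
     \<longleftrightarrow> ((fv + n - fu) mod n \<le> mu \<or> (fu + n - fv) mod n \<le> mv)"
proof -
  have "(\<exists>k::int. int fv - int fu + int n * k \<le> int mu \<and> - int mv \<le> int fv - int fu + int n * k)
    \<longleftrightarrow> (if int fv - int fu > 0 then int fv - int fu \<le> int mu \<or> int n - (int fv - int fu) \<le> int mv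
        else int n + (int fv - int fu) \<le> int mu \<or> - (int fv - int fu) \<le> int mv)"
    by (rule int_lemma) (use assms in auto)
  also have "\<dots> \<longleftrightarrow> ((fv + n - fu) mod n \<le> mu \<or> (fu + n - fv) mod n \<le> mv)"
    using assms by (auto simp: dlem)
  finally show ?thesis .
qed

lemma backward:
  assumes G: "finite_simple_graph V E" and f: "circular_ordering V f" and F: "CA_free V E f"
  shows "circular_arc_graph V E"
proof -
  define n where "n = card V"
  have bij: "bij_betw f V {0..<n}" using f unfolding circular_ordering_def n_def by simp
  have sym: "E u v \<longleftrightarrow> E v u" for u v using G unfolding finite_simple_graph_def by blast
  have irr: "\<not> E v v" for v using G unfolding finite_simple_graph_def by blast
  define g where "g = the_inv_into V f"
  have g1: "i < n \<Longrightarrow> g i \<in> V \<and> f (g i) = i" for i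
    using bij unfolding g_def
    by (auto intro: the_inv_into_into[OF bij_betw_imp_inj_on[OF bij]] f_the_inv_into_f_bij_betw[OF bij]
        simp: bij_betw_def)
  have g2: "v \<in> V \<Longrightarrow> g (f v) = v" for v
    using bij unfolding g_def by (simp add: bij_betw_def the_inv_into_f_f)
  have fV: "v \<in> V \<Longrightarrow> f v < n" for v using bij unfolding bij_betw_def by auto
  have finj: "u \<in> V \<Longrightarrow> v \<in> V \<Longrightarrow> f u = f v \<Longrightarrow> u = v" for u v
    using bij unfolding bij_betw_def inj_on_def by auto
  define R where "R v = {m. m < n \<and> (\<forall>j. 1 \<le> j \<and> j \<le> m \<longrightarrow> E v (g ((f v + j) mod n)))}" for v
  define m where "m v = Max (R v)" for v
  have Rfin: "finite (R v)" for v unfolding R_def by auto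
  have mprops: "m v < n \<and> (\<forall>j. 1 \<le> j \<and> j \<le> m v \<longrightarrow> E v (g ((f v + j) mod n)))
      \<and> (m v + 1 < n \<longrightarrow> \<not> E v (g ((f v + m v + 1) mod n)))" if "v \<in> V" for v
  proof -
    have "0 < n" using fV[OF that] by simp
    then have "0 \<in> R v" unfolding R_def by auto
    then have "m v \<in> R v" unfolding m_def using Rfin by (intro Max_in) auto
    moreover have "m v + 1 < n \<Longrightarrow> E v (g ((f v + m v + 1) mod n)) \<Longrightarrow> False"
    proof -
      assume a: "m v + 1 < n" "E v (g ((f v + m v + 1) mod n))"
      have "m v + 1 \<in> R v" using \<open>m v \<in> R v\<close> a unfolding R_def
        by (auto simp: le_Suc_eq add.assoc)
      then have "m v + 1 \<le> m v" unfolding m_def using Rfin by (intro Max_ge) auto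
      then show False by simp
    qed
    ultimately show ?thesis unfolding R_def by auto
  qed
  define d where "d u v = (f v + n - f u) mod n" for u v
  have adj: "E u v \<longleftrightarrow> (d u v \<le> m u \<or> d v u \<le> m v)" if uv: "u \<in> V" "v \<in> V" "u \<noteq> v" for u v
  proof -
    have ne: "f u \<noteq> f v" using finj uv by auto
    have dd: "d u v + d v u = n" "1 \<le> d u v" "d u v < n" "1 \<le> d v u" "d v u < n"
      using fV[OF uv(1)] fV[OF uv(2)] ne unfolding d_def by (auto simp: dlem)
    have pos1: "(f u + d u v) mod n = f v" 
      using fV[OF uv(1)] fV[OF uv(2)] unfolding d_def by (auto simp: dlem mod_2n)
    have pos2: "(f v + d v u) mod n = f u"
      using fV[OF uv(1)] fV[OF uv(2)] unfolding d_def by (auto simp: dlem mod_2n)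
    show ?thesis
    proof
      assume e: "E u v"
      show "d u v \<le> m u \<or> d v u \<le> m v"
      proof (rule ccontr)
        assume "\<not> (d u v \<le> m u \<or> d v u \<le> m v)"
        then have lt: "m u < d u v" "m v < d v u" by auto
        define c where "c = g ((f u + m u + 1) mod n)"
        define a where "a = g ((f v + m v + 1) mod n)"
        have n0: "0 < n" using fV[OF uv(1)] by simp
        have cV: "c \<in> V" "f c = (f u + m u + 1) mod n" using g1 n0 unfolding c_def by auto
        have aV: "a \<in> V" "f a = (f v + m v + 1) mod n" using g1 n0 unfolding a_def by auto
        have nc: "\<not> E u c" using mprops[OF uv(1)] lt dd unfolding c_def by auto
        have na: "\<not> E v a" using mprops[OF uv(2)] lt dd unfolding a_def by auto
        have "m u + 1 \<noteq> d u v"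
        proof
          assume "m u + 1 = d u v"
          then have "f u + m u + 1 = f u + d u v" by simp
          then have "c = v" unfolding c_def using pos1 g2[OF uv(2)] by (simp only:)
          then show False using nc e by simp
        qed
        then have o1: "m u + 1 < d u v" using lt by simp
        have "m v + 1 \<noteq> d v u"
        proof
          assume "m v + 1 = d v u"
          then have "f v + m v + 1 = f v + d v u" by simp
          then have "a = u" unfolding a_def using pos2 g2[OF uv(1)] by (simp only:)
          then show False using na e sym by simp
        qed
        then have o3: "m v + 1 < d v u" using lt by simp
        have fa: "f a = (f u + (d u v + m v + 1)) mod n"
          using aV(2) pos1 by (metis add.assoc mod_add_left_eq)
        have "clockwise4 f a u c v"
          by (rule cw_lemma[of "f u" n "m u + 1" "d u v" "d u v + m v + 1"])
             (use fV[OF uv(1)] o1 o3 dd cV(2) pos1 fa in \<open>simp_all add: add.assoc\<close>)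
        moreover have "distinct [a, u, c, v]" by (rule clockwise4_distinct) fact
        moreover have "\<not> E a v" using na sym[of a v] by simp
        ultimately show False using F aV(1) uv(1) cV(1) uv(2) e nc
          unfolding CA_free_def by blast
      qed
    next
      assume "d u v \<le> m u \<or> d v u \<le> m v"
      then show "E u v"
      proof
        assume "d u v \<le> m u"
        then have "E u (g ((f u + d u v) mod n))" using mprops[OF uv(1)] dd by auto
        then show ?thesis using pos1 g2[OF uv(2)] by simp
      next
        assume "d v u \<le> m v"
        then have "E v (g ((f v + d v u) mod n))" using mprops[OF uv(2)] dd by auto
        then show ?thesis using pos2 g2[OF uv(1)] sym by simp
      qed
    qed
  qed
  define A where "A v = arc_of_circle (2*pi*f v/n) (2*pi*m v/n)" for v
  have "is_arc (A v)" for v unfolding A_def is_arc_def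
    by (rule exI[of _ "2*pi*f v/n"], rule exI[of _ "2*pi*m v/n"]) auto
  moreover have "E u v \<longleftrightarrow> A u \<inter> A v \<noteq> {}" if uv: "u \<in> V" "v \<in> V" "u \<noteq> v" for u v
  proof -
    have n0: "0 < n" using fV[OF uv(1)] by simp
    have ne: "f u \<noteq> f v" using finj uv by auto
    show ?thesis unfolding A_def arc_grid[OF n0] adj[OF uv] d_def
      by (rule grid_cond[symmetric]) (use fV uv ne mprops in auto)
  qed
  ultimately show ?thesis unfolding circular_arc_graph_def by blast
qed

theorem proposition2:
  fixes V :: "'a set" and E :: "'a \<Rightarrow> 'a \<Rightarrow> bool"
  assumes "finite_simple_graph V E"
  shows "circular_arc_graph V E \<longleftrightarrow> (\<exists>f. circular_ordering V f \<and> CA_free V E f)"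
  using forward[OF assms] backward[OF assms] by blast

end
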